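(* In a Gibbs-type feature model with parameters $\alpha<1$, $\theta>-\alpha$ and weights $(V_{n,k})$, for every $n\ge1$ and $k\ge0$: if $\alpha<0$, $$P(K_n=k)=V_{n,k}\Big\{\frac{(\theta+\alpha)_n-(\theta)_n}{\alpha}\Big\}^k;$$ if $\alpha\in[0,1)$, $$P(K_n=k)=V_{n,k}\big\{g_n(\theta,\alpha)\,(\theta+1)_{n-1}\big\}^k,\qquad g_n(\theta,\alpha)=\sum_{i=1}^n\frac{(\theta+\alpha)_{i-1}}{(\theta+1)_{i-1}}.$$
   Context: Notation: $(x)_m=\Gamma(x+m)/\Gamma(x)$ (Pochhammer symbol); $[n]=\{1,\dots,n\}$. Individuals $i=1,2,\dots$ each display a finite (possibly empty) set of features, identified by almost surely distinct labels. For the sample $\mathbf Z^{(n)}=(Z_1,\dots,Z_n)$ of the first $n$ individuals, $K_n$ is the number of distinct features displayed, labelled $X_1,\dots,X_{K_n}$ in order of appearance; $A_{i,\ell}\in\{0,1\}$ indicates whether individual $i$ displays $X_\ell$, and $m_\ell=\sum_{i=1}^nA_{i,\ell}\in[n]$. The ordered feature allocation is $F_n=(B_{n,1},\dots,B_{n,K_n})$, $B_{n,\ell}=\{i\in[n]:A_{i,\ell}=1\}$. The model admits an exchangeable feature probability function (EFPF) if there are symmetric functions $\pi_n:\bigcup_{k\ge0}[n]^k\to[0,1]$ with $P(F_n=f_n)=\pi_n(m_1,\dots,m_k)$ for every ordered feature allocation $f_n$ of $[n]$ (a sequence of $k$ nonempty subsets of $[n]$ with sizes $m_1,\dots,m_k$),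 all orderings of the same collection of sets being equally likely; the laws for different $n$ are consistent. The model is a Gibbs-type feature model with parameters $\alpha<1$, $\theta>-\alpha$ if $\pi_n(m_1,\dots,m_k)=V_{n,k}\prod_{\ell=1}^k(1-\alpha)_{m_\ell-1}(\theta+\alpha)_{n-m_\ell}$ for nonnegative weights $(V_{n,k})_{n\ge1,k\ge0}$ satisfying $V_{n,k}=\sum_{j\ge0}\frac{(k+j)!}{j!\,k!}\{(\theta+\alpha)_n\}^j(\theta+n)^kV_{n+1,k+j}$. *)

theory Defs
  imports "HOL-Probability.Probability_Mass_Function"
begin

text \<open>An ordered feature allocation of [n]: a finite sequence of nonempty subsets of {1..n}
  (blocks may coincide, since distinct features may be displayed by the same individuals).\<close>
definition ofa :: "nat \<Rightarrow> nat set list \<Rightarrow> bool" where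
  "ofa n f \<longleftrightarrow> (\<forall>B\<in>set f. B \<noteq> {} \<and> B \<subseteq> {1..n})"

definition restr :: "nat \<Rightarrow> nat set list \<Rightarrow> nat set list" where
  "restr n f = filter (\<lambda>B. B \<noteq> {}) (map (\<lambda>B. B \<inter> {1..n}) f)"

definition gibbs_efpf :: "real \<Rightarrow> real \<Rightarrow> (nat \<Rightarrow> nat \<Rightarrow> real) \<Rightarrow> nat \<Rightarrow> nat list \<Rightarrow> real" where
  "gibbs_efpf \<alpha> \<theta> V n ms = V n (length ms) *
     (\<Prod>m\<leftarrow>ms. pochhammer (1 - \<alpha>) (m - 1) * pochhammer (\<theta> + \<alpha>) (n - m))"

text \<open>F n is the law of the ordered feature allocation F_n of [n]; K_n = length F_n.\<close>
definition gibbs_feature_model ::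
  "real \<Rightarrow> real \<Rightarrow> (nat \<Rightarrow> nat \<Rightarrow> real) \<Rightarrow> (nat \<Rightarrow> nat set list pmf) \<Rightarrow> bool" where
  "gibbs_feature_model \<alpha> \<theta> V F \<longleftrightarrow>
     \<alpha> < 1 \<and> \<theta> > - \<alpha> \<and>
     (\<forall>n k. 0 \<le> V n k) \<and>
     (\<forall>n\<ge>1. \<forall>k. (\<lambda>j. real (fact (k + j)) / (real (fact j) * real (fact k)) *
                       (pochhammer (\<theta> + \<alpha>) n) ^ j * (\<theta> + real n) ^ k * V (n + 1) (k + j))
                   sums V n k) \<and>
     (\<forall>n\<ge>1. set_pmf (F n) \<subseteq> {f. ofa n f}) \<and>
     (\<forall>n\<ge>1. \<forall>f. ofa n f \<longrightarrow> pmf (F n) f = gibbs_efpf \<alpha> \<theta> V n (map card f)) \<and>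
     (\<forall>n\<ge>1. map_pmf (restr n) (F (Suc n)) = F n)"

definition g_fun :: "nat \<Rightarrow> real \<Rightarrow> real \<Rightarrow> real" where
  "g_fun n \<theta> \<alpha> = (\<Sum>i=1..n. pochhammer (\<theta> + \<alpha>) (i - 1) / pochhammer (\<theta> + 1) (i - 1))"

end

theory Submission imports Defs begin

lemma sum_lists_prod:
  fixes h :: "'a \<Rightarrow> real"
  assumes "finite A"
  shows "(\<Sum>xs\<in>{xs. set xs \<subseteq> A \<and> length xs = k}. prod_list (map h xs)) = (\<Sum>x\<in>A. h x) ^ k"
proof (induction k)
  case 0
  have "{xs. set xs \<subseteq> A \<and> length xs = 0} = {[]}" by auto
  then show ?case by simp
next
  case (Suc k)
  let ?L = "{xs. set xs \<subseteq> A \<and> length xs = k}"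
  have "(\<Sum>xs\<in>{xs. set xs \<subseteq> A \<and> length xs = Suc k}. prod_list (map h xs))
     = (\<Sum>p\<in>?L \<times> A. prod_list (map h ((\<lambda>(xs, n). n#xs) p)))"
    unfolding lists_length_Suc_eq by (subst sum.reindex) (auto simp: inj_split_Cons)
  also have "\<dots> = (\<Sum>xs\<in>?L. \<Sum>x\<in>A. h x * prod_list (map h xs))"
    unfolding sum.cartesian_product by (simp add: case_prod_unfold)
  also have "\<dots> = (\<Sum>xs\<in>?L. prod_list (map h xs)) * (\<Sum>x\<in>A. h x)"
    by (simp add: sum_distrib_left sum_distrib_right mult.commute)
  finally show ?case using Suc by simp
qed

definition S :: "real \<Rightarrow> real \<Rightarrow> nat \<Rightarrow> real" where
  "S \<alpha> \<theta> n = (\<Sum>m=1..n. real (n choose m) * (pochhammer (1 - \<alpha>) (m - 1) * pochhammer (\<theta> + \<alpha>) (n - m)))"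

lemma S_alt: "S \<alpha> \<theta> n = (\<Sum>j<n. real (n choose Suc j) * (pochhammer (1 - \<alpha>) j * pochhammer (\<theta> + \<alpha>) (n - Suc j)))"
  unfolding S_def by (simp add: sum.atLeast1_atMost_eq)

lemma S_rec: "S \<alpha> \<theta> (Suc n) = (\<theta> + real n) * S \<alpha> \<theta> n + pochhammer (\<theta> + \<alpha>) n"
proof -
  let ?b = "1 - \<alpha>" and ?a = "\<theta> + \<alpha>"
  have "S \<alpha> \<theta> (Suc n) = (\<Sum>j<Suc n. real (n choose j) * (pochhammer ?b j * pochhammer ?a (n - j)))
      + (\<Sum>j<Suc n. real (n choose Suc j) * (pochhammer ?b j * pochhammer ?a (n - j)))"
    unfolding S_alt by (simp add: sum.distrib[symmetric] algebra_simps)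
  also have "(\<Sum>j<Suc n. real (n choose j) * (pochhammer ?b j * pochhammer ?a (n - j)))
     = pochhammer ?a n + (\<Sum>j<n. real (n choose Suc j) * (pochhammer ?b j * (?b + j) * pochhammer ?a (n - Suc j)))"
    by (subst sum.lessThan_Suc_shift) (simp add: pochhammer_Suc)
  also have "(\<Sum>j<Suc n. real (n choose Suc j) * (pochhammer ?b j * pochhammer ?a (n - j)))
     = (\<Sum>j<n. real (n choose Suc j) * (pochhammer ?b j * (pochhammer ?a (n - Suc j) * (?a + real (n - Suc j)))))"
  proof -
    have "(\<Sum>j<Suc n. real (n choose Suc j) * (pochhammer ?b j * pochhammer ?a (n - j)))
        = (\<Sum>j<n. real (n choose Suc j) * (pochhammer ?b j * pochhammer ?a (n - j)))"
      by simp
    also have "\<dots> = (\<Sum>j<n. real (n choose Suc j) * (pochhammer ?b j * (pochhammer ?a (n - Suc j) * (?a + real (n - Suc j)))))"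
    proof (rule sum.cong[OF refl])
      fix j assume "j \<in> {..<n}"
      then have "n - j = Suc (n - Suc j)" by auto
      then show "real (n choose Suc j) * (pochhammer ?b j * pochhammer ?a (n - j)) =
         real (n choose Suc j) * (pochhammer ?b j * (pochhammer ?a (n - Suc j) * (?a + real (n - Suc j))))"
        by (simp only: pochhammer_Suc)
    qed
    finally show ?thesis .
  qed
  also have "pochhammer ?a n + (\<Sum>j<n. real (n choose Suc j) * (pochhammer ?b j * (?b + j) * pochhammer ?a (n - Suc j)))
     + (\<Sum>j<n. real (n choose Suc j) * (pochhammer ?b j * (pochhammer ?a (n - Suc j) * (?a + real (n - Suc j)))))
     = pochhammer ?a n + (\<Sum>j<n. (\<theta> + real n) * (real (n choose Suc j) * (pochhammer ?b j * pochhammer ?a (n - Suc j))))"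
  proof -
    have "\<And>j. j < n \<Longrightarrow> real (n - Suc j) = real n - 1 - real j" by auto
    then show ?thesis
      by (simp add: add.assoc sum.distrib[symmetric], intro sum.cong refl) (auto simp: algebra_simps)
  qed
  finally show ?thesis by (simp add: S_alt sum_distrib_left)
qed

lemma S_alpha: "\<alpha> * S \<alpha> \<theta> n = pochhammer (\<theta> + \<alpha>) n - pochhammer \<theta> n"
proof (induction n)
  case 0 then show ?case by (simp add: S_def)
next
  case (Suc n)
  have "\<alpha> * S \<alpha> \<theta> (Suc n) = (\<theta> + real n) * (\<alpha> * S \<alpha> \<theta> n) + \<alpha> * pochhammer (\<theta> + \<alpha>) n"
    by (simp add: S_rec algebra_simps)
  also have "\<dots> = pochhammer (\<theta> + \<alpha>) (Suc n) - pochhammer \<theta> (Suc n)"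
    by (simp add: Suc pochhammer_Suc algebra_simps)
  finally show ?case .
qed

lemma S_g:
  assumes "\<theta> + 1 > 0" and "n \<ge> 1"
  shows "S \<alpha> \<theta> n = g_fun n \<theta> \<alpha> * pochhammer (\<theta> + 1) (n - 1)"
  using assms(2)
proof (induction n rule: nat_induct_at_least)
  case base
  then show ?case by (simp add: S_def g_fun_def)
next
  case (Suc n)
  have P: "pochhammer (\<theta> + 1) n \<noteq> 0"
    using assms(1) by (simp add: pochhammer_eq_0_iff)
  have Pn: "pochhammer (\<theta> + 1) n = pochhammer (\<theta> + 1) (n - 1) * (\<theta> + real n)"
    using Suc(1) pochhammer_Suc[of "\<theta> + 1" "n - 1"] by (cases n) (auto simp: algebra_simps)
  have g: "g_fun (Suc n) \<theta> \<alpha> = g_fun n \<theta> \<alpha> + pochhammer (\<theta> + \<alpha>) n / pochhammer (\<theta> + 1) n"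
    unfolding g_fun_def using Suc(1) by simp
  have "S \<alpha> \<theta> (Suc n) = (\<theta> + real n) * (g_fun n \<theta> \<alpha> * pochhammer (\<theta> + 1) (n - 1)) + pochhammer (\<theta> + \<alpha>) n"
    by (simp add: S_rec Suc(2))
  also have "\<dots> = g_fun n \<theta> \<alpha> * pochhammer (\<theta> + 1) n + pochhammer (\<theta> + \<alpha>) n"
    by (simp add: Pn)
  also have "\<dots> = g_fun (Suc n) \<theta> \<alpha> * pochhammer (\<theta> + 1) (Suc n - 1)"
    using P by (simp add: g field_simps)
  finally show ?case .
qed

lemma prob_eq:
  assumes "gibbs_feature_model \<alpha> \<theta> V F" and "n \<ge> 1"
  shows "measure_pmf.prob (F n) {f. length f = k} = V n k * S \<alpha> \<theta> n ^ k"
proof -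
  define A where "A = {B. B \<noteq> {} \<and> B \<subseteq> {1..(n::nat)}}"
  define w where "w m = pochhammer (1 - \<alpha>) (m - 1) * pochhammer (\<theta> + \<alpha>) (n - m)" for m
  have finA: "finite A" unfolding A_def by (rule finite_subset[of _ "Pow {1..n}"]) auto
  define L where "L = {xs. set xs \<subseteq> A \<and> length xs = k}"
  have finL: "finite L" unfolding L_def using finite_lists_length_eq[OF finA] .
  have L_eq: "L = {f. ofa n f \<and> length f = k}" unfolding L_def A_def ofa_def by auto
  have sp: "set_pmf (F n) \<subseteq> {f. ofa n f}" and pm: "\<And>f. ofa n f \<Longrightarrow> pmf (F n) f = gibbs_efpf \<alpha> \<theta> V n (map card f)"
    using assms unfolding gibbs_feature_model_def by auto
  have "measure_pmf.prob (F n) {f. length f = k} = measure_pmf.prob (F n) ({f. length f = k} \<inter> set_pmf (F n))"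
    by (simp add: measure_Int_set_pmf)
  also have "{f. length f = k} \<inter> set_pmf (F n) = L \<inter> set_pmf (F n)"
    using sp unfolding L_eq by auto
  also have "measure_pmf.prob (F n) (L \<inter> set_pmf (F n)) = measure_pmf.prob (F n) L"
    by (simp add: measure_Int_set_pmf)
  also have "\<dots> = sum (pmf (F n)) L" using finL by (simp add: measure_measure_pmf_finite)
  also have "\<dots> = (\<Sum>f\<in>L. V n k * prod_list (map (\<lambda>B. w (card B)) f))"
    by (rule sum.cong[OF refl]) (auto simp: L_eq pm gibbs_efpf_def w_def o_def)
  also have "\<dots> = V n k * (\<Sum>B\<in>A. w (card B)) ^ k"
    unfolding sum_distrib_left[symmetric] L_def by (simp add: sum_lists_prod[OF finA])
  also have "(\<Sum>B\<in>A. w (card B)) = (\<Sum>m\<in>{1..n}. real (card {B\<in>A. card B = m}) * w m)"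
  proof (rule sum_fun_comp[OF finA])
    show "card ` A \<subseteq> {1..n}"
    proof
      fix m assume "m \<in> card ` A"
      then obtain B where B: "B \<in> A" "m = card B" by auto
      have "finite B" using B unfolding A_def by (auto intro: finite_subset)
      then have "card B \<ge> 1" using B unfolding A_def by (auto simp: Suc_le_eq card_gt_0_iff)
      moreover have "card B \<le> n" using B unfolding A_def
        by (metis (no_types, lifting) card_atLeastAtMost card_mono diff_Suc_1 finite_atLeastAtMost mem_Collect_eq)
      ultimately show "m \<in> {1..n}" using B by auto
    qed
  qed simp
  also have "\<dots> = S \<alpha> \<theta> n"
    unfolding S_def
  proof (rule sum.cong[OF refl])
    fix m assume m: "m \<in> {1..n}"
    have "{B\<in>A. card B = m} = {B. B \<subseteq> {1..n} \<and> card B = m}"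
      using m unfolding A_def by auto
    then have "card {B\<in>A. card B = m} = n choose m" by (simp add: n_subsets)
    then show "real (card {B\<in>A. card B = m}) * w m =
       real (n choose m) * (pochhammer (1 - \<alpha>) (m - 1) * pochhammer (\<theta> + \<alpha>) (n - m))"
      by (simp add: w_def)
  qed
  finally show ?thesis .
qed

theorem theorem2:
  fixes \<alpha> \<theta> :: real and V :: "nat \<Rightarrow> nat \<Rightarrow> real" and F :: "nat \<Rightarrow> nat set list pmf"
    and n k :: nat
  assumes "gibbs_feature_model \<alpha> \<theta> V F" and "n \<ge> 1"
  shows "(\<alpha> < 0 \<longrightarrow> measure_pmf.prob (F n) {f. length f = k}
            = V n k * ((pochhammer (\<theta> + \<alpha>) n - pochhammer \<theta> n) / \<alpha>) ^ k)
       \<and> (0 \<le> \<alpha> \<longrightarrow> measure_pmf.prob (F n) {f. length f = k}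
            = V n k * (g_fun n \<theta> \<alpha> * pochhammer (\<theta> + 1) (n - 1)) ^ k)"
proof (intro conjI impI)
  assume "\<alpha> < 0"
  then have "S \<alpha> \<theta> n = (pochhammer (\<theta> + \<alpha>) n - pochhammer \<theta> n) / \<alpha>"
    using S_alpha[of \<alpha> \<theta> n] by (simp add: field_simps)
  then show "measure_pmf.prob (F n) {f. length f = k}
            = V n k * ((pochhammer (\<theta> + \<alpha>) n - pochhammer \<theta> n) / \<alpha>) ^ k"
    using prob_eq[OF assms] by simp
next
  assume "0 \<le> \<alpha>"
  moreover have "\<alpha> < 1" "\<theta> > - \<alpha>" using assms(1) unfolding gibbs_feature_model_def by auto
  ultimately have "\<theta> + 1 > 0" by linarith
  then show "measure_pmf.prob (F n) {f. length f = k}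
            = V n k * (g_fun n \<theta> \<alpha> * pochhammer (\<theta> + 1) (n - 1)) ^ k"
    using prob_eq[OF assms] S_g[OF _ assms(2)] by simp
qed
end
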